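(* Let $T:\mathbf{Set}\to\mathbf{Set}$ be a functor with a diagonal-preserving lax extension $L$, let $\tau:(-)^n\to T$ be a natural transformation, and let $\lambda$ be the Moss lifting induced by $\tau$ (w.r.t. $L$). Then for every set $X$ and all $x_1,\dots,x_n\in X$, $$\lambda_X(\{x_1\},\dots,\{x_n\})=\{\tau_X(x_1,\dots,x_n)\}.$$ In particular $\lambda$ preserves singletons.
   Context: For relations $R\subseteq X\times Y$, $S\subseteq Y\times Z$, write $R^\circ\subseteq Y\times X$ for the converse and $R;S\subseteq X\times Z$ for the (diagrammatic) composite; functions are identified with their graphs; $\Delta_X$ is the diagonal (identity relation) on $X$. A lax extension of $T$ is an assignment $L$ mapping each relation $R\subseteq X\times Y$ to a relation $LR\subseteq TX\times TY$ such that $L(R^\circ)=(LR)^\circ$, $R'\subseteq R$ implies $LR'\subseteq LR$, $LR;LS\subseteq L(R;S)$, and $Tf\subseteq Lf$ for every function $f$. It is diagonal-preserving if $L\Delta_X\subseteq\Delta_{TX}$ for all $X$. Let $\in_X\subseteq X\times\mathcal{P}X$ be the element-of relation. The Moss lifting induced by a natural transformation $\tau:(-)^n\to T$ is the $n$-ary predicate lifting $\lambda_X(X_1,\dots,X_n)=\{t\in TX\mid (t,\tau_{\mathcal{P}X}(X_1,\dots,X_n))\in L(\in_X)\}$ for $X_1,\dots,X_n\subseteq X$. A predicate lifting $\lambda/n$ preserves singletons if $|\lambda_X(\{x_1\},\dots,\{x_n\})|=1$ for all sets $X$ and $x_i\in X$. *)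

theory Defs
  imports Main
begin

(* Sets are modelled as subsets X of a universe type 'u; the category Set
   (restricted to this universe) has as morphisms X -> Y the functions f
   with f ` X \<subseteq> Y, taken extensionally on X.  The functor T is given by
   its object part T :: 'u set => 't set and its morphism part Tmap X Y f. *)

definition maps_into :: "('u \<Rightarrow> 'u) \<Rightarrow> 'u set \<Rightarrow> 'u set \<Rightarrow> bool" where
  "maps_into f X Y \<longleftrightarrow> (\<forall>x\<in>X. f x \<in> Y)"

definition graph_on :: "'u set \<Rightarrow> ('u \<Rightarrow> 'v) \<Rightarrow> ('u \<times> 'v) set" where
  "graph_on X f = {(x, f x) | x. x \<in> X}"

definition set_functor ::
  "('u set \<Rightarrow> 't set) \<Rightarrow> ('u set \<Rightarrow> 'u set \<Rightarrow> ('u \<Rightarrow> 'u) \<Rightarrow> 't \<Rightarrow> 't) \<Rightarrow> bool" where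
  "set_functor T Tmap \<longleftrightarrow>
     (\<forall>X Y f. maps_into f X Y \<longrightarrow> (\<forall>t\<in>T X. Tmap X Y f t \<in> T Y)) \<and>
     (\<forall>X Y f g. (\<forall>x\<in>X. f x = g x) \<longrightarrow> (\<forall>t\<in>T X. Tmap X Y f t = Tmap X Y g t)) \<and>
     (\<forall>X. \<forall>t\<in>T X. Tmap X X id t = t) \<and>
     (\<forall>X Y Z f g. maps_into f X Y \<longrightarrow> maps_into g Y Z \<longrightarrow>
        (\<forall>t\<in>T X. Tmap X Z (g \<circ> f) t = Tmap Y Z g (Tmap X Y f t)))"

definition lax_extension ::
  "('u set \<Rightarrow> 't set) \<Rightarrow> ('u set \<Rightarrow> 'u set \<Rightarrow> ('u \<Rightarrow> 'u) \<Rightarrow> 't \<Rightarrow> 't)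
   \<Rightarrow> ('u set \<Rightarrow> 'u set \<Rightarrow> ('u \<times> 'u) set \<Rightarrow> ('t \<times> 't) set) \<Rightarrow> bool" where
  "lax_extension T Tmap L \<longleftrightarrow>
     (\<forall>X Y R. R \<subseteq> X \<times> Y \<longrightarrow> L X Y R \<subseteq> T X \<times> T Y) \<and>
     (\<forall>X Y R. R \<subseteq> X \<times> Y \<longrightarrow> L Y X (R\<inverse>) = (L X Y R)\<inverse>) \<and>
     (\<forall>X Y R R'. R' \<subseteq> R \<longrightarrow> R \<subseteq> X \<times> Y \<longrightarrow> L X Y R' \<subseteq> L X Y R) \<and>
     (\<forall>X Y Z R S. R \<subseteq> X \<times> Y \<longrightarrow> S \<subseteq> Y \<times> Z \<longrightarrow> L X Y R O L Y Z S \<subseteq> L X Z (R O S)) \<and>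
     (\<forall>X Y f. maps_into f X Y \<longrightarrow> graph_on (T X) (Tmap X Y f) \<subseteq> L X Y (graph_on X f))"

definition diagonal_preserving ::
  "('u set \<Rightarrow> 't set) \<Rightarrow> ('u set \<Rightarrow> 'u set \<Rightarrow> ('u \<times> 'u) set \<Rightarrow> ('t \<times> 't) set) \<Rightarrow> bool" where
  "diagonal_preserving T L \<longleftrightarrow> (\<forall>X. L X X (Id_on X) \<subseteq> Id_on (T X))"

(* tau : (-)^n -> T; an element of X^n is a list of length n with entries in X *)
definition nat_trans ::
  "nat \<Rightarrow> ('u set \<Rightarrow> 't set) \<Rightarrow> ('u set \<Rightarrow> 'u set \<Rightarrow> ('u \<Rightarrow> 'u) \<Rightarrow> 't \<Rightarrow> 't)
   \<Rightarrow> ('u set \<Rightarrow> 'u list \<Rightarrow> 't) \<Rightarrow> bool" where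
  "nat_trans n T Tmap \<tau> \<longleftrightarrow>
     (\<forall>X xs. length xs = n \<longrightarrow> set xs \<subseteq> X \<longrightarrow> \<tau> X xs \<in> T X) \<and>
     (\<forall>X Y f xs. maps_into f X Y \<longrightarrow> length xs = n \<longrightarrow> set xs \<subseteq> X \<longrightarrow>
        Tmap X Y f (\<tau> X xs) = \<tau> Y (map f xs))"

(* The universe used: 'a + 'a set, so that both a set X0 :: 'a set (as Inl ` X0)
   and its power set (as Inr ` Pow X0) are objects. *)
definition elem_rel :: "'a set \<Rightarrow> (('a + 'a set) \<times> ('a + 'a set)) set" where
  "elem_rel X0 = {(Inl x, Inr A) | x A. A \<subseteq> X0 \<and> x \<in> A}"

definition moss_lifting ::
  "(('a + 'a set) set \<Rightarrow> 't set)
   \<Rightarrow> (('a + 'a set) set \<Rightarrow> ('a + 'a set) set \<Rightarrow> (('a + 'a set) \<times> ('a + 'a set)) set \<Rightarrow> ('t \<times> 't) set)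
   \<Rightarrow> (('a + 'a set) set \<Rightarrow> ('a + 'a set) list \<Rightarrow> 't) \<Rightarrow> 'a set \<Rightarrow> 'a set list \<Rightarrow> 't set" where
  "moss_lifting T L \<tau> X0 Xs =
     {t \<in> T (Inl ` X0). (t, \<tau> (Inr ` Pow X0) (map Inr Xs)) \<in> L (Inl ` X0) (Inr ` Pow X0) (elem_rel X0)}"

end

theory Submission
  imports Defs
begin

theorem mainTheorem3:
  fixes T :: "('a + 'a set) set \<Rightarrow> 't set"
    and Tmap :: "('a + 'a set) set \<Rightarrow> ('a + 'a set) set \<Rightarrow> (('a + 'a set) \<Rightarrow> ('a + 'a set)) \<Rightarrow> 't \<Rightarrow> 't"
    and L :: "('a + 'a set) set \<Rightarrow> ('a + 'a set) set \<Rightarrow> (('a + 'a set) \<times> ('a + 'a set)) set \<Rightarrow> ('t \<times> 't) set"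
    and \<tau> :: "('a + 'a set) set \<Rightarrow> ('a + 'a set) list \<Rightarrow> 't"
    and n :: nat
    and X0 :: "'a set"
    and xs :: "'a list"
  assumes "set_functor T Tmap"
    and "lax_extension T Tmap L"
    and "diagonal_preserving T L"
    and "nat_trans n T Tmap \<tau>"
    and "length xs = n"
    and "set xs \<subseteq> X0"
  shows "moss_lifting T L \<tau> X0 (map (\<lambda>x. {x}) xs) = {\<tau> (Inl ` X0) (map Inl xs)}
         \<and> card (moss_lifting T L \<tau> X0 (map (\<lambda>x. {x}) xs)) = 1"
proof -
  define X where "X = (Inl ` X0 :: ('a + 'a set) set)"
  define P where "P = (Inr ` Pow X0 :: ('a + 'a set) set)"
  define s where "s = (\<lambda>v::'a + 'a set. case v of Inl x \<Rightarrow> Inr {x} | Inr A \<Rightarrow> v)"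
  define E where "E = elem_rel X0"
  define t0 where "t0 = \<tau> X (map Inl xs)"
  define G where "G = graph_on X s"
  have ms: "maps_into s X P" by (auto simp: maps_into_def s_def X_def P_def)
  have xsX: "set (map Inl xs) \<subseteq> X" using assms(6) by (auto simp: X_def)
  have t0T: "t0 \<in> T X" using assms(4,5) xsX unfolding nat_trans_def t0_def by simp
  have mapeq: "map s (map Inl xs) = map Inr (map (\<lambda>x. {x}) xs)" by (simp add: s_def)
  have u: "\<tau> P (map Inr (map (\<lambda>x. {x}) xs)) = Tmap X P s t0"
  proof -
    have nt: "\<And>X Y f xs. maps_into f X Y \<Longrightarrow> length xs = n \<Longrightarrow> set xs \<subseteq> X \<Longrightarrow>
        Tmap X Y f (\<tau> X xs) = \<tau> Y (map f xs)" using assms(4) unfolding nat_trans_def by blast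
    have "Tmap X P s t0 = \<tau> P (map s (map Inl xs))"
      unfolding t0_def by (rule nt[OF ms]) (use assms(5) xsX in auto)
    thus ?thesis by (simp only: mapeq)
  qed
  have GXP: "G \<subseteq> X \<times> P" using ms by (auto simp: G_def graph_on_def maps_into_def)
  have EXP: "E \<subseteq> X \<times> P" by (auto simp: E_def elem_rel_def X_def P_def)
  have GE: "G \<subseteq> E" by (auto simp: G_def graph_on_def E_def elem_rel_def X_def s_def)
  have lax: "lax_extension T Tmap L" by fact
  note L5 = lax[unfolded lax_extension_def]
  have mono: "\<And>X Y R R'. R' \<subseteq> R \<Longrightarrow> R \<subseteq> X \<times> Y \<Longrightarrow> L X Y R' \<subseteq> L X Y R"
    using conjunct1[OF conjunct2[OF conjunct2[OF L5]]] by blast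
  have conv: "\<And>X Y R. R \<subseteq> X \<times> Y \<Longrightarrow> L Y X (R\<inverse>) = (L X Y R)\<inverse>"
    using conjunct1[OF conjunct2[OF L5]] by blast
  have comp: "\<And>X Y Z R S. R \<subseteq> X \<times> Y \<Longrightarrow> S \<subseteq> Y \<times> Z \<Longrightarrow> L X Y R O L Y Z S \<subseteq> L X Z (R O S)"
    using conjunct1[OF conjunct2[OF conjunct2[OF conjunct2[OF L5]]]] by blast
  have gr: "\<And>X Y f. maps_into f X Y \<Longrightarrow> graph_on (T X) (Tmap X Y f) \<subseteq> L X Y (graph_on X f)"
    using conjunct2[OF conjunct2[OF conjunct2[OF conjunct2[OF L5]]]] by blast
  have tG: "(t0, Tmap X P s t0) \<in> L X P G"
  proof -
    have "graph_on (T X) (Tmap X P s) \<subseteq> L X P (graph_on X s)" using gr[OF ms] .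
    moreover have "(t0, Tmap X P s t0) \<in> graph_on (T X) (Tmap X P s)"
      using t0T by (auto simp: graph_on_def)
    ultimately show ?thesis by (auto simp: G_def)
  qed
  have tE: "(t0, Tmap X P s t0) \<in> L X P E"
    using tG mono[OF GE EXP] by blast
  have sub: "moss_lifting T L \<tau> X0 (map (\<lambda>x. {x}) xs) \<subseteq> {t0}"
  proof
    fix t assume "t \<in> moss_lifting T L \<tau> X0 (map (\<lambda>x. {x}) xs)"
    hence tT: "t \<in> T X" and tu: "(t, Tmap X P s t0) \<in> L X P E"
      using u by (auto simp: moss_lifting_def X_def P_def E_def)
    have "(Tmap X P s t0, t0) \<in> L P X (G\<inverse>)" using tG conv[OF GXP] by blast
    hence "(t, t0) \<in> L X P E O L P X (G\<inverse>)" using tu by blast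
    hence "(t, t0) \<in> L X X (E O G\<inverse>)" using comp[OF EXP, of "G\<inverse>" X] GXP by blast
    moreover have "E O G\<inverse> \<subseteq> Id_on X"
      by (auto simp: E_def elem_rel_def G_def graph_on_def s_def X_def)
    moreover have "E O G\<inverse> \<subseteq> X \<times> X" using EXP GXP by blast
    ultimately have "(t, t0) \<in> L X X (Id_on X)" using mono[of "E O G\<inverse>" "Id_on X" X X, OF _ Id_on_subset_Times]
      by blast
    hence "t = t0" using assms(3) by (auto simp: diagonal_preserving_def)
    thus "t \<in> {t0}" by simp
  qed
  have "t0 \<in> moss_lifting T L \<tau> X0 (map (\<lambda>x. {x}) xs)"
    using t0T tE u by (simp add: moss_lifting_def X_def P_def E_def)
  with sub have eq: "moss_lifting T L \<tau> X0 (map (\<lambda>x. {x}) xs) = {t0}" by blast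
  show ?thesis using eq by (simp add: t0_def X_def)
qed

end
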